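(* Let $V$ be a finite set, let $d\ge 1$, let $R=(\le_1,\ldots,\le_d)$ be a $d$-representation on $V$, and let $R'=(\le_1,\ldots,\le_{d-1})$. Then the Hasse diagram of the inclusion poset of $\Sigma(R)\setminus\Sigma(R')$ admits a complete acyclic matching.
   Context: A $k$-representation on $V$ is a family of $k$ linear orders on $V$. For a linear order $\le$ on $V$, $x\in V$ and $F\subseteq V$, $x$ dominates $F$ in $\le$ if $f\le x$ for all $f\in F$; $x$ dominates $F$ in a representation if it dominates $F$ in at least one of its orders. For a representation $S$ on $V$, the supremum section $\Sigma(S)$ is the set of subsets $F\subseteq V$ such that every $v\in V$ dominates $F$ in $S$. When $d=1$, $R'$ has no orders and the same definition applies. The Hasse diagram of a finite poset $(P,\le)$ is the digraph with an arc $(u,w)$ whenever $w<u$ and there is no $z$ with $w<z<u$ (the transitive reduction). A matching $M$ of the Hasse diagram is a set of arcs no two sharing an endpoint; it is complete (perfect) if every element of $P$ is an endpoint of an arc of $M$; it is acyclic if the digraph obtained from the Hasse diagram by reversing the orientation of the arcs in $M$ has no directed cycle. *)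

theory Defs
  imports Main
begin

text \<open>A k-representation on V: a list of k linear orders on V (as relations, (x,y) means x \<le> y).\<close>
definition representation :: "'a set \<Rightarrow> 'a rel list \<Rightarrow> bool" where
  "representation V S \<longleftrightarrow> (\<forall>r \<in> set S. linear_order_on V r)"

definition dominates_in_order :: "'a rel \<Rightarrow> 'a \<Rightarrow> 'a set \<Rightarrow> bool" where
  "dominates_in_order r x F \<longleftrightarrow> (\<forall>f \<in> F. (f, x) \<in> r)"

definition dominates_in_rep :: "'a rel list \<Rightarrow> 'a \<Rightarrow> 'a set \<Rightarrow> bool" where
  "dominates_in_rep S x F \<longleftrightarrow> (\<exists>r \<in> set S. dominates_in_order r x F)"

definition supremum_section :: "'a set \<Rightarrow> 'a rel list \<Rightarrow> 'a set set" where
  "supremum_section V S = {F. F \<subseteq> V \<and> (\<forall>v \<in> V. dominates_in_rep S v F)}"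

definition hasse_diagram :: "'b set \<Rightarrow> ('b \<Rightarrow> 'b \<Rightarrow> bool) \<Rightarrow> ('b \<times> 'b) set" where
  "hasse_diagram P lt = {(u, w). u \<in> P \<and> w \<in> P \<and> lt w u \<and> \<not> (\<exists>z \<in> P. lt w z \<and> lt z u)}"

definition is_matching :: "('b \<times> 'b) set \<Rightarrow> ('b \<times> 'b) set \<Rightarrow> bool" where
  "is_matching H M \<longleftrightarrow> M \<subseteq> H \<and>
     (\<forall>e \<in> M. \<forall>e' \<in> M. e \<noteq> e' \<longrightarrow> {fst e, snd e} \<inter> {fst e', snd e'} = {})"

definition complete_matching :: "'b set \<Rightarrow> ('b \<times> 'b) set \<Rightarrow> bool" where
  "complete_matching P M \<longleftrightarrow> (\<forall>x \<in> P. \<exists>e \<in> M. x = fst e \<or> x = snd e)"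

definition acyclic_matching :: "('b \<times> 'b) set \<Rightarrow> ('b \<times> 'b) set \<Rightarrow> bool" where
  "acyclic_matching H M \<longleftrightarrow> acyclic ((H - M) \<union> M\<inverse>)"

end

theory Submission
  imports Defs
begin

locale lm =
  fixes V :: "'a set" and R :: "'a rel list"
  assumes finV: "finite V" and Rne: "R \<noteq> []" and rep: "representation V R"
begin

definition "r = last R"
definition "R' = butlast R"
definition "NN F = {v\<in>V. \<not> dominates_in_rep R' v F}"
definition "P = supremum_section V R - supremum_section V R'"
definition "uu F = (SOME x. x \<in> NN F \<and> (\<forall>y\<in>NN F. (x,y) \<in> r))"
definition "M = {(A, A - {uu A}) | A. A \<in> P \<and> uu A \<in> A}"
definition "H = hasse_diagram P (\<subset>)"

lemma setR: "set R = insert r (set R')"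
  using Rne unfolding r_def R'_def by (cases R rule: rev_cases) auto

lemma linR: "q \<in> set R \<Longrightarrow> linear_order_on V q"
  using rep by (simp add: representation_def)

lemma lin: "linear_order_on V r" using linR setR by auto

lemma linR': "q \<in> set R' \<Longrightarrow> linear_order_on V q" using linR setR by auto

lemma lo_facts:
  assumes "linear_order_on V q"
  shows "q \<subseteq> V \<times> V" "x \<in> V \<Longrightarrow> (x,x) \<in> q" "(x,y) \<in> q \<Longrightarrow> (y,z) \<in> q \<Longrightarrow> (x,z) \<in> q"
    "(x,y) \<in> q \<Longrightarrow> (y,x) \<in> q \<Longrightarrow> x = y"
    "x \<in> V \<Longrightarrow> y \<in> V \<Longrightarrow> x \<noteq> y \<Longrightarrow> (x,y) \<in> q \<or> (y,x) \<in> q"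
  using assms unfolding linear_order_on_def partial_order_on_def preorder_on_def refl_on_def
    total_on_def trans_def antisym_def by blast+

lemmas rf = lo_facts[OF lin]

lemma domR: "dominates_in_rep R v F \<longleftrightarrow> dominates_in_rep R' v F \<or> dominates_in_order r v F"
  unfolding dominates_in_rep_def using setR by auto

lemma P_iff: "F \<in> P \<longleftrightarrow> F \<subseteq> V \<and> (\<forall>v\<in>V. dominates_in_rep R v F) \<and> NN F \<noteq> {}"
  unfolding P_def supremum_section_def NN_def by auto

lemma NN_mono: "F \<subseteq> G \<Longrightarrow> NN F \<subseteq> NN G"
  unfolding NN_def dominates_in_rep_def dominates_in_order_def by blast

lemma NN_sub: "NN F \<subseteq> V" unfolding NN_def by auto

lemma min_ex: "finite A \<Longrightarrow> A \<noteq> {} \<Longrightarrow> A \<subseteq> V \<Longrightarrow> \<exists>x\<in>A. \<forall>y\<in>A. (x,y)\<in>r"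
proof (induction A rule: finite_ne_induct)
  case (singleton x)
  then show ?case using rf(2) by auto
next
  case (insert a F)
  then obtain x where x: "x \<in> F" "\<forall>y\<in>F. (x,y)\<in>r" by auto
  have "a \<in> V" "x \<in> V" using insert x by auto
  then consider "a = x" | "(a,x) \<in> r" | "(x,a) \<in> r" using rf(5) by blast
  then show ?case
  proof cases
    case 1 then show ?thesis using x insert by auto
  next
    case 2 then show ?thesis using x rf(3) rf(2) \<open>a \<in> V\<close> by blast
  next
    case 3 then show ?thesis using x by blast
  qed
qed

lemma uu_prop: "NN F \<noteq> {} \<Longrightarrow> uu F \<in> NN F \<and> (\<forall>y\<in>NN F. (uu F, y) \<in> r)"
proof -
  assume "NN F \<noteq> {}"
  then have "\<exists>x. x \<in> NN F \<and> (\<forall>y\<in>NN F. (x,y) \<in> r)"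
    using min_ex[of "NN F"] NN_sub finV finite_subset by blast
  then show ?thesis unfolding uu_def by (rule someI_ex)
qed

lemma uu_eq: "x \<in> NN F \<Longrightarrow> \<forall>y\<in>NN F. (x,y)\<in>r \<Longrightarrow> uu F = x"
  using uu_prop[of F] rf(4) by blast

lemma key: assumes "F \<in> P" shows "\<forall>f\<in>F. (f, uu F) \<in> r" "uu F \<in> NN F" "\<forall>y\<in>NN F. (uu F, y) \<in> r"
proof -
  have ne: "NN F \<noteq> {}" using assms P_iff by auto
  show u: "uu F \<in> NN F" "\<forall>y\<in>NN F. (uu F, y) \<in> r" using uu_prop[OF ne] by auto
  have "uu F \<in> V" using u NN_sub by auto
  then have "dominates_in_rep R (uu F) F" using assms P_iff by auto
  then show "\<forall>f\<in>F. (f, uu F) \<in> r" using u(1) domR unfolding NN_def dominates_in_order_def by auto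
qed

lemma remove:
  assumes "F \<in> P" "uu F \<in> F"
  shows "F - {uu F} \<in> P" "uu (F - {uu F}) = uu F"
proof -
  define u where "u = uu F"
  have u: "u \<in> NN F" "\<forall>y\<in>NN F. (u, y) \<in> r" using key[OF assms(1)] u_def by auto
  have uV: "u \<in> V" using u NN_sub by auto
  have "u \<in> NN (F - {u})"
  proof -
    have "\<not> dominates_in_rep R' u (F - {u})"
    proof
      assume "dominates_in_rep R' u (F - {u})"
      then obtain q where q: "q \<in> set R'" "\<forall>f\<in>F - {u}. (f,u) \<in> q"
        unfolding dominates_in_rep_def dominates_in_order_def by auto
      have "(u,u) \<in> q" using lo_facts(2)[OF linR'[OF q(1)] uV] .
      then have "dominates_in_rep R' u F" using q unfolding dominates_in_rep_def dominates_in_order_def by blast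
      then show False using u(1) unfolding NN_def by auto
    qed
    then show ?thesis using uV unfolding NN_def by auto
  qed
  moreover have "\<forall>y\<in>NN (F - {u}). (u, y) \<in> r" using u(2) NN_mono[of "F - {u}" F] by auto
  ultimately have e: "uu (F - {u}) = u" by (rule uu_eq)
  have "F - {u} \<in> P" using assms(1) \<open>u \<in> NN (F - {u})\<close> unfolding P_iff dominates_in_rep_def dominates_in_order_def
    by blast
  then show "F - {uu F} \<in> P" "uu (F - {uu F}) = uu F" using e u_def by auto
qed

lemma add:
  assumes "F \<in> P" "uu F \<notin> F"
  shows "insert (uu F) F \<in> P" "uu (insert (uu F) F) = uu F"
proof -
  define u where "u = uu F"
  have u: "u \<in> NN F" "\<forall>y\<in>NN F. (u, y) \<in> r" "\<forall>f\<in>F. (f, u) \<in> r" using key[OF assms(1)] u_def by auto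
  have uV: "u \<in> V" using u NN_sub by auto
  have FV: "F \<subseteq> V" using assms(1) P_iff by auto
  have ext: "dominates_in_rep R' y (insert u F)" if "y \<in> V" "y \<notin> NN F" for y
  proof -
    from that obtain q where q: "q \<in> set R'" "\<forall>f\<in>F. (f,y) \<in> q"
      unfolding NN_def dominates_in_rep_def dominates_in_order_def by auto
    from u(1) q(1) obtain f where f: "f \<in> F" "(f,u) \<notin> q"
      unfolding NN_def dominates_in_rep_def dominates_in_order_def by auto
    have "f \<in> V" using f FV by auto
    have "f \<noteq> u" using f assms(2) u_def by auto
    then have "(u,f) \<in> q" using lo_facts(5)[OF linR'[OF q(1)] \<open>f \<in> V\<close> uV] f by auto
    then have "(u,y) \<in> q" using lo_facts(3)[OF linR'[OF q(1)]] q f by blast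
    then show ?thesis using q unfolding dominates_in_rep_def dominates_in_order_def by auto
  qed
  have NNeq: "NN (insert u F) \<subseteq> NN F"
    using ext unfolding NN_def by auto
  have un: "u \<in> NN (insert u F)" using u(1) NN_mono[of F "insert u F"] by auto
  have e: "uu (insert u F) = u" using uu_eq[OF un] NNeq u(2) by auto
  have "\<forall>v\<in>V. dominates_in_rep R v (insert u F)"
  proof
    fix v assume v: "v \<in> V"
    show "dominates_in_rep R v (insert u F)"
    proof (cases "v \<in> NN F")
      case True
      then have "(u,v) \<in> r" using u(2) by auto
      then have "dominates_in_order r v (insert u F)"
        using u(3) rf(3) unfolding dominates_in_order_def by blast
      then show ?thesis using domR by auto
    next
      case False then show ?thesis using ext v domR by auto
    qed
  qed
  then have "insert u F \<in> P" using un FV uV unfolding P_iff by auto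
  then show "insert (uu F) F \<in> P" "uu (insert (uu F) F) = uu F" using e u_def by auto
qed

lemma M_sub: "M \<subseteq> H"
proof
  fix e assume "e \<in> M"
  then obtain A where A: "e = (A, A - {uu A})" "A \<in> P" "uu A \<in> A" unfolding M_def by auto
  have "A - {uu A} \<in> P" using remove A by auto
  moreover have "\<not> (\<exists>z\<in>P. A - {uu A} \<subset> z \<and> z \<subset> A)" by blast
  ultimately show "e \<in> H" using A unfolding H_def hasse_diagram_def by auto
qed

lemma matching: "is_matching H M"
  unfolding is_matching_def
proof (intro conjI M_sub ballI impI)
  fix e e' assume e: "e \<in> M" "e' \<in> M" "e \<noteq> e'"
  obtain A where A: "e = (A, A - {uu A})" "A \<in> P" "uu A \<in> A" using e unfolding M_def by auto
  obtain B where B: "e' = (B, B - {uu B})" "B \<in> P" "uu B \<in> B" using e unfolding M_def by auto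
  have rA: "uu (A - {uu A}) = uu A" using remove A by auto
  have rB: "uu (B - {uu B}) = uu B" using remove B by auto
  have "A \<noteq> B" using e(3) A(1) B(1) by blast
  moreover have "A \<noteq> B - {uu B}" using rB A(3) by (metis Diff_iff singletonI)
  moreover have "A - {uu A} \<noteq> B" using rA B(3) by (metis Diff_iff singletonI)
  moreover have "A - {uu A} \<noteq> B - {uu B}"
  proof
    assume h: "A - {uu A} = B - {uu B}"
    then have "uu A = uu B" using rA rB by metis
    then have "A = B" using h A(3) B(3) by (metis insert_Diff)
    then show False using \<open>A \<noteq> B\<close> by simp
  qed
  ultimately show "{fst e, snd e} \<inter> {fst e', snd e'} = {}" unfolding A(1) B(1) fst_conv snd_conv
    by (simp only: Int_insert_left Int_insert_right insert_iff empty_iff simp_thms if_False Int_empty_left Int_empty_right) (simp add: eq_commute)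
qed

lemma complete: "complete_matching P M"
  unfolding complete_matching_def
proof
  fix F assume F: "F \<in> P"
  show "\<exists>e\<in>M. F = fst e \<or> F = snd e"
  proof (cases "uu F \<in> F")
    case True
    then have "(F, F - {uu F}) \<in> M" using F unfolding M_def by auto
    then show ?thesis by (rule bexI[rotated]) simp
  next
    case False
    have "insert (uu F) F \<in> P" "uu (insert (uu F) F) = uu F" using add F False by auto
    then have "(insert (uu F) F, insert (uu F) F - {uu (insert (uu F) F)}) \<in> M" unfolding M_def by auto
    moreover have "insert (uu F) F - {uu (insert (uu F) F)} = F"
      using \<open>uu (insert (uu F) F) = uu F\<close> False by auto
    ultimately show ?thesis by (metis snd_conv)
  qed
qed

definition "rk S = card {v\<in>V. (v, uu S) \<in> r}"
definition "hh S = 2 * (card V - card (S - {uu S})) + (if uu S \<in> S then 1 else 0::nat)"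
definition "gg S = (rk S, hh S)"

lemma acyc: "acyclic_matching H M"
proof -
  have sub: "(H - M) \<union> M\<inverse> \<subseteq> inv_image (less_than <*lex*> less_than) gg"
  proof
    fix x assume "x \<in> (H - M) \<union> M\<inverse>"
    then consider "x \<in> H - M" | "x \<in> M\<inverse>" by blast
    then show "x \<in> inv_image (less_than <*lex*> less_than) gg"
    proof cases
      case 1
      then obtain A B where x: "x = (A,B)" "A \<in> P" "B \<in> P" "B \<subset> A" "(A,B) \<notin> M"
        unfolding H_def hasse_diagram_def by auto
      have kA: "uu A \<in> NN A" "\<forall>y\<in>NN A. (uu A, y) \<in> r" using key[OF x(2)] by auto
      have kB: "uu B \<in> NN B" using key[OF x(3)] by auto
      have le: "(uu A, uu B) \<in> r" using kA kB NN_mono[of B A] x(4) by auto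
      have AV: "A \<subseteq> V" using x P_iff by auto
      show ?thesis
      proof (cases "uu A = uu B")
        case False
        have "{v\<in>V. (v, uu A) \<in> r} \<subset> {v\<in>V. (v, uu B) \<in> r}"
        proof
          show "{v\<in>V. (v, uu A) \<in> r} \<subseteq> {v\<in>V. (v, uu B) \<in> r}" using le rf(3) by blast
          have "uu B \<in> V" using kB NN_sub by auto
          then have "uu B \<in> {v\<in>V. (v, uu B) \<in> r}" using rf(2) by auto
          moreover have "uu B \<notin> {v\<in>V. (v, uu A) \<in> r}" using le rf(4) False by auto
          ultimately show "{v\<in>V. (v, uu A) \<in> r} \<noteq> {v\<in>V. (v, uu B) \<in> r}" by blast
        qed
        then have "rk A < rk B" unfolding rk_def by (rule psubset_card_mono[rotated]) (use finV in auto)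
        then show ?thesis using x unfolding gg_def by auto
      next
        case True
        define u where "u = uu A"
        have "B - {u} \<subset> A - {u}"
        proof -
          have "B - {u} \<noteq> A - {u}"
          proof
            assume h: "B - {u} = A - {u}"
            have "u \<notin> B"
            proof
              assume "u \<in> B" then have "A = B" using h x(4) by blast
              then show False using x(4) by auto
            qed
            then have "u \<in> A" "B = A - {u}" using h x(4) by blast+
            then have "(A,B) \<in> M" unfolding M_def u_def using x(2) by auto
            then show False using x(5) by auto
          qed
          then show ?thesis using x(4) by blast
        qed
        then have c: "card (B - {u}) < card (A - {u})"
          by (rule psubset_card_mono[rotated]) (use AV finV finite_subset in blast)
        have "card (A - {u}) \<le> card V" using AV finV by (meson Diff_subset card_mono order_trans)
        then have "hh A < hh B" unfolding hh_def using c True u_def by auto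
        moreover have "rk A = rk B" unfolding rk_def using True by simp
        ultimately show ?thesis using x unfolding gg_def by auto
      qed
    next
      case 2
      then obtain A where x: "x = (A - {uu A}, A)" "A \<in> P" "uu A \<in> A" unfolding M_def by auto
      have e: "uu (A - {uu A}) = uu A" using remove x by auto
      have "rk (A - {uu A}) = rk A" unfolding rk_def using e by simp
      moreover have "hh (A - {uu A}) < hh A" unfolding hh_def using e x(3) by auto
      ultimately show ?thesis using x unfolding gg_def by auto
    qed
  qed
  have "wf (inv_image (less_than <*lex*> less_than) gg)" by auto
  then have "acyclic (inv_image (less_than <*lex*> less_than) gg)" by (rule wf_acyclic)
  then show ?thesis unfolding acyclic_matching_def using sub acyclic_subset by blast
qed

lemma main: "\<exists>M. let P = supremum_section V R - supremum_section V (butlast R);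
                H = hasse_diagram P (\<subset>)
            in is_matching H M \<and> complete_matching P M \<and> acyclic_matching H M"
proof -
  have "supremum_section V R - supremum_section V (butlast R) = P" by (simp add: P_def R'_def)
  then show ?thesis unfolding Let_def using matching complete acyc H_def by auto
qed

end

theorem lemma4:
  fixes V :: "'a set" and R :: "'a rel list"
  assumes "finite V"
    and "length R \<ge> 1"
    and "representation V R"
  shows "\<exists>M. let P = supremum_section V R - supremum_section V (butlast R);
                H = hasse_diagram P (\<subset>)
            in is_matching H M \<and> complete_matching P M \<and> acyclic_matching H M"
proof -
  interpret lm V R using assms by unfold_locales auto
  show ?thesis by (rule main)
qed

end
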